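(* Let $v\in V^X$ with $I(v)=J_\ell$ for some $\ell\in\{1,\dots,N-1\}$, let $k\in\mathbb{N}$ and $i\in\Pi$, and suppose there exists $c\in\mathbb{N}$ such that $\sup\{\mathrm{Cost}_i(\rho)\mid\rho\in\Lambda^k(v)\}=c$. Then $c\le\mathcal{O}\big(|V|^{(|V|+3)(|\Pi|+2)}\big)$.
   Context: Let $\mathcal{G}$ be a quantitative reachability game on an arena $G=(\Pi,V,(V_i)_{i\in\Pi},E)$ (finite player set $\Pi$, finite vertex set $V$ with $|V|\ge2$, $|\Pi|\le|V|$, partition $(V_i)$, every vertex has a successor) with targets $F_i\subseteq V$ and costs $\mathrm{Cost}_i(\rho)=$ least $k$ with $\rho_k\in F_i$ (or $+\infty$); $v_0\in V$. Extended game: arena $X$ with vertices $V^X=V\times2^\Pi$, edges $((v,I),(v',I'))\in E^X$ iff $(v,v')\in E$ and $I'=I\cup\{i:v'\in F_i\}$, $(v,I)\in V^X_i$ iff $v\in V_i$, targets $F^X_i=\{(v,I):i\in I\}$ with corresponding reachability costs $\mathrm{Cost}_i$; $x_0=(v_0,\{i:v_0\in F_i\})$; $I(u)$ is the second component. $\mathcal{I}$ is the set of $I$ with some $(v,I)$ reachable from $x_0$, $N=|\mathcal{I}|$, $J_1<\dots<J_N$ a fixed total order of $\mathcal{I}$ extending $I<I'$ iff $I\ne I'$ and some $(v',I')$ is reachable from some $(v,I)$. $V^{\ge J_n}=\{(v,J_m):v\in V,m\ge n\}$. Labelings: for $\lambda:V^X\to\mathbb{N}\cup\{+\infty\}$,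 a play $\rho$ of $X$ is $\lambda$-consistent if $\mathrm{Cost}_i(\rho_{\ge n})\le\lambda(\rho_n)$ whenever $\rho_n\in V^X_i$. $\lambda^0(u)=0$ if $u\in V^X_i$ and $i\in I(u)$, else $+\infty$. The update of $\lambda^k$ w.r.t. $V^{\ge J_n}$ keeps values outside $V^{\ge J_n}$ and for $u\in V^{\ge J_n}\cap V^X_i$ sets $\lambda^{k+1}(u)=0$ if $i\in I(u)$, otherwise $1+\min_{(u,u')\in E^X}\sup\{\mathrm{Cost}_i(\rho):\rho\in\Lambda^k(u')\}$ ($1+(+\infty)=+\infty$). The sequence is generated by $n_0=N$, $\lambda^{k+1}=$ update of $\lambda^k$ w.r.t. $V^{\ge J_{n_k}}$, $n_{k+1}=n_k-1$ if $\lambda^{k+1}=\lambda^k$ and $n_k>1$, else $n_{k+1}=n_k$. $\Lambda^k(v)$ is the set of $\lambda^k$-consistent plays from $v$. The $\mathcal{O}$ is with respect to the game parameters $|V|,|\Pi|$. *)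

theory Defs
  imports Main "HOL-Library.Extended_Nat"
begin

record ('p, 'v) game =
  players :: "'p set"
  verts   :: "'v set"
  edges   :: "('v \<times> 'v) set"
  owner   :: "'v \<Rightarrow> 'p"
  target  :: "'p \<Rightarrow> 'v set"

definition wf_game :: "('p, 'v) game \<Rightarrow> bool" where
  "wf_game G \<longleftrightarrow>
     finite (players G) \<and> finite (verts G) \<and> card (verts G) \<ge> 2 \<and>
     card (players G) \<le> card (verts G) \<and>
     (\<forall>v \<in> verts G. owner G v \<in> players G) \<and>
     edges G \<subseteq> verts G \<times> verts G \<and>
     (\<forall>v \<in> verts G. \<exists>v'. (v, v') \<in> edges G) \<and>
     (\<forall>i \<in> players G. target G i \<subseteq> verts G)"

type_synonym ('p, 'v) xvert = "'v \<times> 'p set"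

definition XV :: "('p, 'v) game \<Rightarrow> ('p, 'v) xvert set" where
  "XV G = {(v, I). v \<in> verts G \<and> I \<subseteq> players G}"

definition XE :: "('p, 'v) game \<Rightarrow> (('p, 'v) xvert \<times> ('p, 'v) xvert) set" where
  "XE G = {((v, I), (v', I')). (v, v') \<in> edges G \<and> I \<subseteq> players G \<and>
             I' = I \<union> {i \<in> players G. v' \<in> target G i}}"

definition x0 :: "('p, 'v) game \<Rightarrow> 'v \<Rightarrow> ('p, 'v) xvert" where
  "x0 G v0 = (v0, {i \<in> players G. v0 \<in> target G i})"

definition is_play :: "('p, 'v) game \<Rightarrow> (nat \<Rightarrow> ('p, 'v) xvert) \<Rightarrow> bool" where
  "is_play G \<rho> \<longleftrightarrow> (\<forall>n. (\<rho> n, \<rho> (Suc n)) \<in> XE G)"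

definition costX :: "'p \<Rightarrow> (nat \<Rightarrow> ('p, 'v) xvert) \<Rightarrow> enat" where
  "costX i \<rho> = (if \<exists>n. i \<in> snd (\<rho> n) then enat (LEAST n. i \<in> snd (\<rho> n)) else \<infinity>)"

definition consistent :: "('p, 'v) game \<Rightarrow> (('p, 'v) xvert \<Rightarrow> enat) \<Rightarrow> (nat \<Rightarrow> ('p, 'v) xvert) \<Rightarrow> bool" where
  "consistent G lam \<rho> \<longleftrightarrow>
     (\<forall>n. costX (owner G (fst (\<rho> n))) (\<lambda>m. \<rho> (n + m)) \<le> lam (\<rho> n))"

definition Lam :: "('p, 'v) game \<Rightarrow> (('p, 'v) xvert \<Rightarrow> enat) \<Rightarrow> ('p, 'v) xvert \<Rightarrow> (nat \<Rightarrow> ('p, 'v) xvert) set" where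
  "Lam G lam u = {\<rho>. is_play G \<rho> \<and> \<rho> 0 = u \<and> consistent G lam \<rho>}"

definition lab0 :: "('p, 'v) game \<Rightarrow> ('p, 'v) xvert \<Rightarrow> enat" where
  "lab0 G u = (if u \<in> XV G \<and> owner G (fst u) \<in> snd u then 0 else \<infinity>)"

definition ge_set :: "('p, 'v) game \<Rightarrow> (nat \<Rightarrow> 'p set) \<Rightarrow> nat \<Rightarrow> nat \<Rightarrow> ('p, 'v) xvert set" where
  "ge_set G J N n = {(v, J m) | v m. v \<in> verts G \<and> n \<le> m \<and> m \<le> N}"

definition update :: "('p, 'v) game \<Rightarrow> (nat \<Rightarrow> 'p set) \<Rightarrow> nat \<Rightarrow> nat \<Rightarrow>
    (('p, 'v) xvert \<Rightarrow> enat) \<Rightarrow> ('p, 'v) xvert \<Rightarrow> enat" where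
  "update G J N n lam u =
     (if u \<in> ge_set G J N n \<and> u \<in> XV G then
        (if owner G (fst u) \<in> snd u then 0
         else 1 + (INF u' \<in> {u'. (u, u') \<in> XE G}.
                     Sup (costX (owner G (fst u)) ` Lam G lam u')))
      else lam u)"

primrec labseq :: "('p, 'v) game \<Rightarrow> (nat \<Rightarrow> 'p set) \<Rightarrow> nat \<Rightarrow> nat \<Rightarrow>
    (('p, 'v) xvert \<Rightarrow> enat) \<times> nat" where
  "labseq G J N 0 = (lab0 G, N)"
| "labseq G J N (Suc k) =
     (let lam = fst (labseq G J N k); n = snd (labseq G J N k);
          lam' = update G J N n lam
      in (lam', if lam' = lam \<and> n > 1 then n - 1 else n))"

definition Iset :: "('p, 'v) game \<Rightarrow> 'v \<Rightarrow> 'p set set" where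
  "Iset G v0 = {snd u | u. (x0 G v0, u) \<in> (XE G)\<^sup>*}"

definition reach_lt :: "('p, 'v) game \<Rightarrow> 'p set \<Rightarrow> 'p set \<Rightarrow> bool" where
  "reach_lt G I I' \<longleftrightarrow> I \<noteq> I' \<and>
     (\<exists>v v'. (v, I) \<in> XV G \<and> ((v, I), (v', I')) \<in> (XE G)\<^sup>*)"

definition valid_order :: "('p, 'v) game \<Rightarrow> 'v \<Rightarrow> (nat \<Rightarrow> 'p set) \<Rightarrow> bool" where
  "valid_order G v0 J \<longleftrightarrow>
     bij_betw J {1..card (Iset G v0)} (Iset G v0) \<and>
     (\<forall>a \<in> {1..card (Iset G v0)}. \<forall>b \<in> {1..card (Iset G v0)}.
        reach_lt G (J a) (J b) \<longrightarrow> a < b)"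

end

theory Submission imports Defs Complex_Main begin
lemma succ_pow_le:
  fixes n :: nat assumes "n \<ge> 2" shows "(n+1)^n \<le> n^(n+2)"
proof -
  have n0: "real n > 0" using assms by simp
  have "(1 + 1 / real n) \<le> exp (1 / real n)" by (rule exp_ge_add_one_self)
  hence "(1 + 1 / real n)^n \<le> exp (1 / real n)^n"
    by (intro power_mono) (auto simp: n0 less_imp_le)
  also have "exp (1 / real n)^n = exp 1"
    using n0 by (simp add: exp_of_nat_mult[symmetric])
  also have "\<dots> \<le> 3" by (rule exp_le)
  also have "(3::real) \<le> real n ^ 2"
  proof -
    have "(2::real)^2 \<le> real n ^ 2" using assms by (intro power_mono) auto
    thus ?thesis by simp
  qed
  finally have h: "(1 + 1 / real n)^n \<le> real n ^ 2" .
  have e: "real n * (1 + 1 / real n) = real (n+1)" using n0 by (simp add: field_simps)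
  have "real ((n+1)^n) = (real n * (1 + 1 / real n))^n" by (simp only: e of_nat_power)
  also have "\<dots> = real n ^ n * (1 + 1 / real n)^n" by (simp add: power_mult_distrib)
  also have "\<dots> \<le> real n ^ n * real n ^ 2" using h by (intro mult_left_mono) auto
  also have "\<dots> = real (n^(n+2))" by (simp add: power_add power2_eq_square)
  finally show ?thesis by linarith
qed

lemma final_num:
  fixes n p :: nat assumes "n \<ge> 2"
  shows "(n+1)^(2 + p*n + n) \<le> n^((n+3)*(p+2))"
proof -
  have "(n+1)^(2 + p*n + n) = (n+1)^(n*(p+1) + 2)"
    by (simp add: algebra_simps)
  also have "\<dots> = ((n+1)^n)^(p+1) * (n+1)^2"
    by (simp only: power_mult power_add)
  also have "\<dots> \<le> (n^(n+2))^(p+1) * (n^2)^2"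
  proof (intro mult_mono power_mono)
    show "(n+1)^n \<le> n^(n+2)" using succ_pow_le assms by blast
    show "n + 1 \<le> n^2" proof -
      have "n + 1 \<le> n * 2" using assms by simp
      also have "\<dots> \<le> n * n" using assms by (intro mult_left_mono) auto
      finally show ?thesis by (simp add: power2_eq_square)
    qed
  qed auto
  also have "\<dots> = n^((n+2)*(p+1) + 2*2)" by (simp only: power_mult power_add)
  also have "\<dots> \<le> n^((n+3)*(p+2))"
    using assms by (intro power_increasing) (auto simp: algebra_simps)
  finally show ?thesis .
qed
definition lamk where "lamk G J N k = fst (labseq G J N k)"
definition nkk where "nkk G J N k = snd (labseq G J N k)"

lemma lamk_0: "lamk G J N 0 = lab0 G" by (simp add: lamk_def)
lemma lamk_Suc: "lamk G J N (Suc k) = update G J N (nkk G J N k) (lamk G J N k)"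
  by (simp add: lamk_def nkk_def Let_def)
lemma nkk_Suc_le: "nkk G J N (Suc k) \<le> nkk G J N k"
  by (simp add: nkk_def Let_def)

lemma ge_set_anti: "n' \<le> n \<Longrightarrow> ge_set G J N n \<subseteq> ge_set G J N n'"
  unfolding ge_set_def by fastforce

lemma Lam_mono: "(\<And>u. lam u \<le> lam' u) \<Longrightarrow> Lam G lam x \<subseteq> Lam G lam' x"
  unfolding Lam_def consistent_def using order_trans by blast

lemma unchanged: "u \<notin> ge_set G J N (nkk G J N k) \<Longrightarrow> lamk G J N k u = lab0 G u"
proof (induction k)
  case 0 then show ?case by (simp add: lamk_0)
next
  case (Suc k)
  have "u \<notin> ge_set G J N (nkk G J N k)"
    using Suc.prems ge_set_anti[OF nkk_Suc_le[of G J N k]] by blast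
  with Suc.IH show ?case by (simp add: lamk_Suc update_def)
qed

lemma lamk_mono: "lamk G J N (Suc k) u \<le> lamk G J N k u"
proof (induction k arbitrary: u)
  case 0
  show ?case by (simp add: lamk_Suc lamk_0 update_def lab0_def)
next
  case (Suc k)
  let ?o = "owner G (fst u)"
  show ?case
  proof (cases "u \<in> ge_set G J N (nkk G J N (Suc k)) \<and> u \<in> XV G \<and> ?o \<notin> snd u")
    case False
    then show ?thesis
      by (auto simp: lamk_Suc[of G J N "Suc k"] update_def)
  next
    case True
    show ?thesis
    proof (cases "u \<in> ge_set G J N (nkk G J N k)")
      case False
      hence "lamk G J N k u = lab0 G u" by (rule unchanged)
      hence "lamk G J N (Suc k) u = lab0 G u" using False by (simp add: lamk_Suc[of G J N k] update_def)
      with True show ?thesis by (simp add: lab0_def)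
    next
      case T2: True
      have sub: "\<And>u'. Lam G (lamk G J N (Suc k)) u' \<subseteq> Lam G (lamk G J N k) u'"
        by (rule Lam_mono) (rule Suc.IH)
      have "(INF u' \<in> {u'. (u, u') \<in> XE G}. Sup (costX ?o ` Lam G (lamk G J N (Suc k)) u'))
         \<le> (INF u' \<in> {u'. (u, u') \<in> XE G}. Sup (costX ?o ` Lam G (lamk G J N k) u'))"
        by (intro INF_mono) (meson Sup_subset_mono image_mono sub order_refl)
      hence "1 + (INF u' \<in> {u'. (u, u') \<in> XE G}. Sup (costX ?o ` Lam G (lamk G J N (Suc k)) u'))
         \<le> 1 + (INF u' \<in> {u'. (u, u') \<in> XE G}. Sup (costX ?o ` Lam G (lamk G J N k) u'))"
        by (rule add_left_mono)
      with True T2 show ?thesis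
        by (simp add: lamk_Suc[of G J N "Suc k"] lamk_Suc[of G J N k] update_def)
    qed
  qed
qed

lemma XE_XV: "wf_game G \<Longrightarrow> (x, y) \<in> XE G \<Longrightarrow> x \<in> XV G \<and> y \<in> XV G"
  unfolding wf_game_def XE_def XV_def by auto

lemma XE_snd: "(x, y) \<in> XE G \<Longrightarrow> snd x \<subseteq> snd y"
  unfolding XE_def by auto

lemma play_XV: "wf_game G \<Longrightarrow> is_play G \<rho> \<Longrightarrow> \<rho> m \<in> XV G"
  unfolding is_play_def using XE_XV by blast

lemma play_mono: "is_play G \<rho> \<Longrightarrow> m \<le> m' \<Longrightarrow> snd (\<rho> m) \<subseteq> snd (\<rho> m')"
  using lift_Suc_mono_le[of "\<lambda>m. snd (\<rho> m)"] XE_snd unfolding is_play_def by blast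

lemma costX_le: "i \<in> snd (\<sigma> t) \<Longrightarrow> costX i \<sigma> \<le> enat t"
  unfolding costX_def by (auto intro: Least_le)

lemma costX_wit: "costX i \<sigma> \<le> enat L \<Longrightarrow> \<exists>t. t \<le> L \<and> i \<in> snd (\<sigma> t)"
  unfolding costX_def by (auto split: if_splits intro: LeastI)

lemma costX_inf: "\<forall>m. i \<notin> snd (\<sigma> m) \<Longrightarrow> costX i \<sigma> = \<infinity>"
  unfolding costX_def by auto


lemma window:
  assumes wf: "wf_game G" and play: "is_play G \<rho>" and cons: "consistent G lam \<rho>"
  and fin: "\<forall>\<sigma> \<in> Lam G lam (\<rho> 0). costX j \<sigma> \<noteq> \<infinity>"
  and Mb: "\<forall>w \<in> XV G. snd (\<rho> 0) \<subseteq> snd w \<longrightarrow> j \<notin> snd w \<longrightarrow> owner G (fst w) \<notin> snd w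
              \<longrightarrow> lam w \<noteq> \<infinity> \<longrightarrow> lam w \<le> enat M"
  and jt: "j \<notin> snd (\<rho> (s + M + card (verts G)))"
  shows "snd (\<rho> s) \<subset> snd (\<rho> (s + M + card (verts G)))"
proof (rule ccontr)
  define n where "n = card (verts G)"
  define t where "t = s + M + n"
  have finV: "finite (verts G)" using wf unfolding wf_game_def by auto
  assume "\<not> snd (\<rho> s) \<subset> snd (\<rho> (s + M + card (verts G)))"
  moreover have "snd (\<rho> s) \<subseteq> snd (\<rho> t)" using play_mono[OF play] unfolding t_def by simp
  ultimately have eq: "snd (\<rho> s) = snd (\<rho> t)" unfolding t_def n_def by blast
  define I where "I = snd (\<rho> t)"
  have jI: "j \<notin> I" using jt unfolding I_def t_def n_def .
  have const: "\<And>m. s \<le> m \<Longrightarrow> m \<le> t \<Longrightarrow> snd (\<rho> m) = I"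
    using play_mono[OF play] eq unfolding I_def by (metis subset_antisym)
  have upI: "\<And>m. m \<le> t \<Longrightarrow> snd (\<rho> m) \<subseteq> I"
    using play_mono[OF play] unfolding I_def by blast
  obtain p q where pq: "s \<le> p" "p < q" "q \<le> s + n" "\<rho> p = \<rho> q"
  proof -
    have "\<not> inj_on (\<lambda>m. fst (\<rho> m)) {s..s+n}"
    proof
      assume inj: "inj_on (\<lambda>m. fst (\<rho> m)) {s..s+n}"
      have "(\<lambda>m. fst (\<rho> m)) ` {s..s+n} \<subseteq> verts G"
        using play_XV[OF wf play] unfolding XV_def by (auto simp: mem_Times_iff)
      from card_inj_on_le[OF inj this finV] show False unfolding n_def by simp
    qed
    then obtain a b where ab: "a \<in> {s..s+n}" "b \<in> {s..s+n}" "a \<noteq> b" "fst (\<rho> a) = fst (\<rho> b)"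
      unfolding inj_on_def by blast
    have "snd (\<rho> a) = snd (\<rho> b)" using ab(1,2) const unfolding t_def by auto
    with ab(4) have e: "\<rho> a = \<rho> b" by (simp add: prod_eq_iff)
    show thesis
    proof (cases "a < b")
      case True then show ?thesis using that[of a b] ab e by auto
    next
      case False then show ?thesis using that[of b a] ab e by auto
    qed
  qed
  define L where "L = q - p"
  have L0: "L > 0" using pq unfolding L_def by simp
  define f where "f m = (if m < p then m else p + (m - p) mod L)" for m
  define \<rho>' where "\<rho>' m = \<rho> (f m)" for m
  have fq: "f m < q" for m
  proof (cases "m < p")
    case False
    have "(m - p) mod L < L" using L0 by simp
    then have "p + (m - p) mod L < q" using pq unfolding L_def by linarith
    then show ?thesis using False unfolding f_def by simp
  qed (use pq f_def in auto)
  have fp: "p \<le> m \<Longrightarrow> p \<le> f m" for m unfolding f_def by auto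
  have low: "x \<le> p \<Longrightarrow> \<rho>' x = \<rho> x" for x
    unfolding \<rho>'_def f_def by auto
  have edge: "(\<rho>' m, \<rho>' (Suc m)) \<in> XE G" for m
  proof (cases "m < p")
    case True
    then show ?thesis using low[of m] low[of "Suc m"] play unfolding is_play_def by simp
  next
    case False
    define r where "r = (m - p) mod L"
    have a: "\<rho>' m = \<rho> (p + r)" using False unfolding \<rho>'_def f_def r_def by simp
    have "Suc m - p = Suc (m - p)" using False by simp
    hence "(Suc m - p) mod L = (if Suc r = L then 0 else Suc r)"
      unfolding r_def by (simp add: mod_Suc)
    hence "\<rho>' (Suc m) = \<rho> (Suc (p + r))"
    proof (cases "Suc r = L")
      case True
      hence "Suc (p + r) = q" using pq unfolding L_def by linarith
      then show ?thesis using True False pq \<open>(Suc m - p) mod L = _\<close> unfolding \<rho>'_def f_def by simp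
    next
      case F2: False
      then show ?thesis using False \<open>(Suc m - p) mod L = _\<close> unfolding \<rho>'_def f_def by simp
    qed
    with a show ?thesis using play unfolding is_play_def by simp
  qed
  have play': "is_play G \<rho>'" unfolding is_play_def using edge by blast
  have snd': "snd (\<rho>' m) \<subseteq> I" for m
    using upI[of "f m"] fq[of m] pq unfolding \<rho>'_def t_def by simp
  have cost': "costX j \<rho>' = \<infinity>" using snd' jI by (intro costX_inf) blast
  have start: "\<rho>' 0 = \<rho> 0" using low by simp
  have cons': "consistent G lam \<rho>'"
    unfolding consistent_def
  proof
    fix m
    let ?o = "owner G (fst (\<rho>' m))"
    show "costX ?o (\<lambda>k. \<rho>' (m + k)) \<le> lam (\<rho>' m)"
    proof (cases "?o \<in> snd (\<rho>' m) \<or> lam (\<rho>' m) = \<infinity>")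
      case True
      then show ?thesis
      proof
        assume "?o \<in> snd (\<rho>' m)"
        hence "costX ?o (\<lambda>k. \<rho>' (m + k)) \<le> enat 0" by (intro costX_le) simp
        then show ?thesis by (simp add: zero_enat_def[symmetric])
      qed simp
    next
      case False
      then obtain L0 where L0e: "lam (\<rho>' m) = enat L0" and oo: "?o \<notin> snd (\<rho>' m)" by auto
      define m0 where "m0 = f m"
      have rm: "\<rho>' m = \<rho> m0" unfolding m0_def \<rho>'_def ..
      have "costX ?o (\<lambda>k. \<rho> (m0 + k)) \<le> lam (\<rho> m0)"
        using cons rm unfolding consistent_def by metis
      with L0e rm obtain t1 where t1: "t1 \<le> L0" "?o \<in> snd (\<rho> (m0 + t1))"
        using costX_wit by fastforce
      have "L0 \<le> M"
      proof -
        have "\<rho> m0 \<in> XV G" by (rule play_XV[OF wf play])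
        moreover have "snd (\<rho> 0) \<subseteq> snd (\<rho> m0)" using play_mono[OF play] by simp
        moreover have "j \<notin> snd (\<rho> m0)" using snd'[of m] jI rm by auto
        ultimately have "lam (\<rho> m0) \<le> enat M" using Mb oo L0e rm by auto
        thus ?thesis using L0e rm by simp
      qed
      show ?thesis
      proof (cases "m < p")
        case True
        hence m0m: "m0 = m" unfolding m0_def f_def by simp
        show ?thesis
        proof (cases "m + t1 \<le> p")
          case True
          hence "?o \<in> snd (\<rho>' (m + t1))" using low t1 m0m by simp
          hence "costX ?o (\<lambda>k. \<rho>' (m + k)) \<le> enat t1" by (intro costX_le)
          then show ?thesis using t1 L0e by (simp add: order_trans)
        next
          case False
          show ?thesis
          proof (cases "?o \<in> snd (\<rho> p)")
            case True
            hence "?o \<in> snd (\<rho>' (m + (p - m)))" using low \<open>m < p\<close> by simp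
            hence "costX ?o (\<lambda>k. \<rho>' (m + k)) \<le> enat (p - m)" by (intro costX_le)
            moreover have "p - m \<le> L0" using False t1 by simp
            ultimately show ?thesis using L0e by (simp add: order_trans)
          next
            case oI: False
            have "snd (\<rho> p) = I" using const pq unfolding t_def by simp
            hence "m0 + t1 > t"
              using oI t1(2) play_mono[OF play, of "m0 + t1" t] unfolding I_def by (metis not_le subsetD)
            with m0m pq \<open>m < p\<close> \<open>L0 \<le> M\<close> t1 show ?thesis unfolding t_def by linarith
          qed
        qed
      next
        case False
        hence m0r: "p \<le> m0" "m0 < q" using fp fq unfolding m0_def by auto
        have "snd (\<rho> m0) = I" using const m0r pq unfolding t_def by simp
        hence "?o \<notin> I" using oo rm by simp
        hence "m0 + t1 > t"
          using t1(2) play_mono[OF play, of "m0 + t1" t] unfolding I_def by (meson not_le subsetD)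
        with m0r pq \<open>L0 \<le> M\<close> t1 show ?thesis unfolding t_def by linarith
      qed
    qed
  qed
  have "\<rho>' \<in> Lam G lam (\<rho> 0)" unfolding Lam_def using play' start cons' by simp
  with fin cost' show False by blast
qed


lemma chain:
  assumes wf: "wf_game G" and play: "is_play G \<rho>" and cons: "consistent G lam \<rho>"
  and fin: "\<forall>\<sigma> \<in> Lam G lam (\<rho> 0). costX j \<sigma> \<noteq> \<infinity>"
  and Mb: "\<forall>w \<in> XV G. snd (\<rho> 0) \<subseteq> snd w \<longrightarrow> j \<notin> snd w \<longrightarrow> owner G (fst w) \<notin> snd w
              \<longrightarrow> lam w \<noteq> \<infinity> \<longrightarrow> lam w \<le> enat M"
  shows "j \<notin> snd (\<rho> (a * (M + card (verts G)))) \<Longrightarrow>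
         card (snd (\<rho> 0)) + a \<le> card (snd (\<rho> (a * (M + card (verts G)))))"
proof (induction a)
  case 0 then show ?case by simp
next
  case (Suc a)
  let ?K = "M + card (verts G)"
  have e: "Suc a * ?K = a * ?K + M + card (verts G)" by simp
  have "j \<notin> snd (\<rho> (a * ?K))" using Suc.prems play_mono[OF play, of "a * ?K" "Suc a * ?K"] by auto
  with Suc.IH have ih: "card (snd (\<rho> 0)) + a \<le> card (snd (\<rho> (a * ?K)))" by blast
  have "snd (\<rho> (a * ?K)) \<subset> snd (\<rho> (Suc a * ?K))"
    unfolding e by (rule window[OF wf play cons fin Mb]) (use Suc.prems in \<open>simp add: algebra_simps\<close>)
  moreover have "finite (snd (\<rho> (Suc a * ?K)))"
    using play_XV[OF wf play, of "Suc a * ?K"] wf unfolding XV_def wf_game_def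
    by (auto intro: rev_finite_subset)
  ultimately have "card (snd (\<rho> (a * ?K))) < card (snd (\<rho> (Suc a * ?K)))"
    by (rule psubset_card_mono[rotated])
  with ih show ?case by simp
qed

lemma cost_bound:
  assumes wf: "wf_game G" and x: "x \<in> XV G" and j: "j \<in> players G"
  and S: "Sup (costX j ` Lam G lam x) = enat c"
  and Mb: "\<forall>w \<in> XV G. snd x \<subseteq> snd w \<longrightarrow> j \<notin> snd w \<longrightarrow> owner G (fst w) \<notin> snd w
              \<longrightarrow> lam w \<noteq> \<infinity> \<longrightarrow> lam w \<le> enat M"
  shows "c \<le> card (players G - snd x) * (M + card (verts G))"
proof (cases "Lam G lam x = {}")
  case True
  then have "c = 0" using S by (simp add: bot_enat_def zero_enat_def)
  then show ?thesis by simp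
next
  case False
  let ?A = "costX j ` Lam G lam x"
  have finA: "finite ?A" using S unfolding Sup_enat_def by (auto split: if_splits)
  have "Max ?A \<in> ?A" using finA False by (intro Max_in) auto
  moreover have "Max ?A = enat c" using S finA False unfolding Sup_enat_def by auto
  ultimately obtain \<rho> where r: "\<rho> \<in> Lam G lam x" "costX j \<rho> = enat c" by auto
  have fin: "\<forall>\<sigma> \<in> Lam G lam x. costX j \<sigma> \<noteq> \<infinity>"
  proof
    fix \<sigma> assume "\<sigma> \<in> Lam G lam x"
    hence "costX j \<sigma> \<le> Sup ?A" by (intro Sup_upper) auto
    thus "costX j \<sigma> \<noteq> \<infinity>" using S by (metis enat_ord_simps(5) infinity_ileE)
  qed
  have play: "is_play G \<rho>" and r0: "\<rho> 0 = x" and cons: "consistent G lam \<rho>"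
    using r(1) unfolding Lam_def by auto
  define d where "d = card (players G - snd x)"
  define K where "K = M + card (verts G)"
  have finP: "finite (players G)" using wf unfolding wf_game_def by auto
  have sx: "snd x \<subseteq> players G" using x unfolding XV_def by auto
  have "j \<in> snd (\<rho> (d * K))"
  proof (rule ccontr)
    assume nj: "j \<notin> snd (\<rho> (d * K))"
    have "card (snd x) + d \<le> card (snd (\<rho> (d * K)))"
      using chain[OF wf play cons, of j M d] fin Mb nj r0 unfolding K_def by simp
    moreover have "card (snd x) + d = card (players G)"
      unfolding d_def using sx finP
      by (metis card_Diff_subset card_mono diff_add_inverse le_add_diff_inverse infinite_super)
    moreover have "snd (\<rho> (d * K)) \<subseteq> players G - {j}"
      using play_XV[OF wf play, of "d * K"] nj unfolding XV_def by auto
    hence "card (snd (\<rho> (d * K))) \<le> card (players G) - 1"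
      using finP j by (metis card_Diff_singleton card_mono finite_Diff)
    moreover have "card (players G) > 0" using finP j card_gt_0_iff by blast
    ultimately show False by linarith
  qed
  hence "costX j \<rho> \<le> enat (d * K)" by (rule costX_le)
  with r(2) show ?thesis unfolding d_def K_def by simp
qed


definition fk where
  "fk G J N k I = card {v \<in> verts G. owner G v \<notin> I \<and> lamk G J N k (v, I) \<noteq> \<infinity>}"
definition dI where "dI G I = card (players G - I)"

lemma fk_le: "wf_game G \<Longrightarrow> fk G J N k I \<le> card (verts G)"
  unfolding fk_def wf_game_def by (intro card_mono) auto

lemma fin_persist: "lamk G J N k w \<noteq> \<infinity> \<Longrightarrow> lamk G J N (Suc k) w \<noteq> \<infinity>"
  using lamk_mono[of G J N k w] by (metis enat_ord_simps(5) infinity_ileE)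

lemma fk_mono: "wf_game G \<Longrightarrow> fk G J N k I \<le> fk G J N (Suc k) I"
proof -
  assume "wf_game G"
  hence "finite (verts G)" unfolding wf_game_def by auto
  moreover have "{v \<in> verts G. owner G v \<notin> I \<and> lamk G J N k (v, I) \<noteq> \<infinity>}
     \<subseteq> {v \<in> verts G. owner G v \<notin> I \<and> lamk G J N (Suc k) (v, I) \<noteq> \<infinity>}"
    using fin_persist[of G J N k] by blast
  ultimately show ?thesis unfolding fk_def by (intro card_mono) auto
qed

lemma Inf_enat_in: "(A::enat set) \<noteq> {} \<Longrightarrow> Inf A \<in> A"
  unfolding Inf_enat_def by (auto intro: LeastI)

lemma bound_lam:
  assumes wf: "wf_game G"
  shows "\<forall>u a. u \<in> XV G \<longrightarrow> owner G (fst u) \<notin> snd u \<longrightarrow> lamk G J N k u = enat a \<longrightarrow>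
     a + card (verts G) + 1 \<le> (card (verts G) + 1) ^ (1 + dI G (snd u) * card (verts G) + fk G J N k (snd u))"
proof (induction k)
  case 0
  then show ?case by (simp add: lamk_0 lab0_def)
next
  case (Suc k)
  define n where "n = card (verts G)"
  have n2: "n \<ge> 2" using wf unfolding wf_game_def n_def by auto
  have finP: "finite (players G)" and pn: "card (players G) \<le> n"
    using wf unfolding wf_game_def n_def by auto
  show ?case
  proof (intro allI impI)
    fix u a
    assume uX: "u \<in> XV G" and oo: "owner G (fst u) \<notin> snd u" and ua: "lamk G J N (Suc k) u = enat a"
    define I where "I = snd u"
    define o' where "o' = owner G (fst u)"
    have IP: "I \<subseteq> players G" using uX unfolding XV_def I_def by auto
    have oP: "o' \<in> players G" using uX wf unfolding XV_def wf_game_def o'_def by auto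
    have d1: "dI G I \<ge> 1" using oP oo finP unfolding dI_def I_def o'_def
      by (metis DiffI One_nat_def Suc_leI card_gt_0_iff empty_iff finite_Diff)
    have dn: "dI G I \<le> n" using pn finP unfolding dI_def
      by (meson card_mono Diff_subset le_trans)
    show "a + card (verts G) + 1 \<le> (card (verts G) + 1) ^ (1 + dI G (snd u) * card (verts G) + fk G J N (Suc k) (snd u))"
    proof (cases "lamk G J N k u")
      case (enat b)
      have "a \<le> b" using lamk_mono[of G J N k u] ua enat by simp
      moreover have "b + n + 1 \<le> (n + 1) ^ (1 + dI G (snd u) * n + fk G J N k (snd u))"
        using Suc.IH uX oo enat unfolding n_def by blast
      moreover have "(n + 1) ^ (1 + dI G (snd u) * n + fk G J N k (snd u))
          \<le> (n + 1) ^ (1 + dI G (snd u) * n + fk G J N (Suc k) (snd u))"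
        using fk_mono[OF wf] by (intro power_increasing) auto
      ultimately show ?thesis unfolding n_def by linarith
    next
      case infinity
      define U where "U = {u'. (u, u') \<in> XE G}"
      define S where "S u' = Sup (costX o' ` Lam G (lamk G J N k) u')" for u'
      have upd: "lamk G J N (Suc k) u = 1 + (INF u' \<in> U. S u')"
      proof (cases "u \<in> ge_set G J N (nkk G J N k) \<and> u \<in> XV G")
        case True
        then show ?thesis using oo unfolding lamk_Suc update_def U_def S_def o'_def by simp
      next
        case False
        then have "lamk G J N (Suc k) u = lamk G J N k u" unfolding lamk_Suc update_def
          by (simp only: if_not_P[OF False] if_False)
        with ua infinity show ?thesis by simp
      qed
      have Ine: "(INF u' \<in> U. S u') \<noteq> \<infinity>"
      proof
        assume "(INF u' \<in> U. S u') = \<infinity>"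
        with upd ua show False by simp
      qed
      hence "U \<noteq> {}" by (auto simp: top_enat_def)
      hence "Inf (S ` U) \<in> S ` U" by (intro Inf_enat_in) auto
      then obtain u' where u'U: "u' \<in> U" and Su0: "Inf (S ` U) = S u'" by blast
      hence Su': "S u' = (INF u' \<in> U. S u')" by simp
      obtain c where Sc: "S u' = enat c" using Ine Su' by (cases "S u'") auto
      have "enat a = 1 + enat c" using upd ua Su' Sc by simp
      hence ac: "a = c + 1" by (simp add: one_enat_def)
      have u'X: "u' \<in> XV G" using XE_XV[OF wf] u'U unfolding U_def by blast
      have Iu': "I \<subseteq> snd u'" using XE_snd u'U unfolding U_def I_def by blast
      define E where "E = dI G I * n + fk G J N (Suc k) I"
      define M where "M = (n + 1) ^ E - n - 1"
      have new: "fk G J N k I < fk G J N (Suc k) I"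
      proof -
        have fs: "finite {v \<in> verts G. owner G v \<notin> I \<and> lamk G J N (Suc k) (v, I) \<noteq> \<infinity>}"
          using wf unfolding wf_game_def by auto
        have "{v \<in> verts G. owner G v \<notin> I \<and> lamk G J N k (v, I) \<noteq> \<infinity>}
            \<subset> {v \<in> verts G. owner G v \<notin> I \<and> lamk G J N (Suc k) (v, I) \<noteq> \<infinity>}"
        proof
          show "{v \<in> verts G. owner G v \<notin> I \<and> lamk G J N k (v, I) \<noteq> \<infinity>}
            \<subseteq> {v \<in> verts G. owner G v \<notin> I \<and> lamk G J N (Suc k) (v, I) \<noteq> \<infinity>}"
            using fin_persist[of G J N k] by blast
          have "u = (fst u, I)" unfolding I_def by simp
          moreover have "fst u \<in> verts G" using uX unfolding XV_def by auto
          ultimately have "fst u \<in> {v \<in> verts G. owner G v \<notin> I \<and> lamk G J N (Suc k) (v, I) \<noteq> \<infinity>}"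
            "fst u \<notin> {v \<in> verts G. owner G v \<notin> I \<and> lamk G J N k (v, I) \<noteq> \<infinity>}"
            using ua infinity oo unfolding I_def by (metis (mono_tags, lifting) enat.distinct(1) mem_Collect_eq)+
          then show "{v \<in> verts G. owner G v \<notin> I \<and> lamk G J N k (v, I) \<noteq> \<infinity>}
            \<noteq> {v \<in> verts G. owner G v \<notin> I \<and> lamk G J N (Suc k) (v, I) \<noteq> \<infinity>}" by blast
        qed
        then show ?thesis unfolding fk_def using fs by (rule psubset_card_mono[rotated])
      qed
      have E1: "E \<ge> 1" using d1 n2 unfolding E_def
        by (metis le_add1 le_trans mult_1 mult_le_mono one_le_numeral)
      have PE: "(n + 1) ^ E \<ge> n + 1" using E1
        by (metis One_nat_def Suc_eq_plus1 le_add2 power_increasing power_one_right)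
      have Mb: "\<forall>w \<in> XV G. snd u' \<subseteq> snd w \<longrightarrow> o' \<notin> snd w \<longrightarrow> owner G (fst w) \<notin> snd w
              \<longrightarrow> lamk G J N k w \<noteq> \<infinity> \<longrightarrow> lamk G J N k w \<le> enat M"
      proof (intro ballI impI)
        fix w assume wX: "w \<in> XV G" and sw: "snd u' \<subseteq> snd w" and ow: "o' \<notin> snd w"
          and ow2: "owner G (fst w) \<notin> snd w" and wf': "lamk G J N k w \<noteq> \<infinity>"
        then obtain b where b: "lamk G J N k w = enat b" by auto
        have ih: "b + n + 1 \<le> (n + 1) ^ (1 + dI G (snd w) * n + fk G J N k (snd w))"
          using Suc.IH wX ow2 b unfolding n_def by blast
        have "1 + dI G (snd w) * n + fk G J N k (snd w) \<le> E"
        proof (cases "snd w = I")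
          case True
          then show ?thesis using new unfolding E_def by simp
        next
          case False
          hence sub: "I \<subset> snd w" using Iu' sw by blast
          have swP: "snd w \<subseteq> players G" using wX unfolding XV_def by auto
          have "players G - snd w \<subset> players G - I" using sub swP IP by blast
          hence "dI G (snd w) < dI G I" unfolding dI_def using finP
            by (meson finite_Diff psubset_card_mono)
          hence "dI G (snd w) * n + n \<le> dI G I * n"
            by (metis add.commute less_iff_Suc_add mult_Suc mult_le_mono1 le_add1 add_le_mono order_refl)
          moreover have "fk G J N k (snd w) \<le> n" using fk_le[OF wf] unfolding n_def by blast
          moreover have "fk G J N (Suc k) I \<ge> 1" using new by simp
          ultimately show ?thesis unfolding E_def by linarith
        qed
        hence "(n + 1) ^ (1 + dI G (snd w) * n + fk G J N k (snd w)) \<le> (n + 1) ^ E"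
          by (intro power_increasing) auto
        with ih have "b \<le> M" unfolding M_def by linarith
        then show "lamk G J N k w \<le> enat M" using b by simp
      qed
      have "c \<le> card (players G - snd u') * (M + n)"
        using cost_bound[OF wf u'X oP _ Mb] Sc unfolding S_def n_def by blast
      moreover have "card (players G - snd u') \<le> dI G I"
        unfolding dI_def using Iu' finP by (intro card_mono) auto
      ultimately have "c \<le> dI G I * (M + n)" by (meson le_trans mult_le_mono1)
      also have "\<dots> \<le> n * (M + n)" using dn by (rule mult_le_mono1)
      finally have cb: "c \<le> n * (M + n)" .
      have PM: "(n + 1) ^ E = M + n + 1" unfolding M_def using PE by simp
      have "a + n + 1 \<le> n * (M + n) + n + 2" using cb ac by simp
      also have "\<dots> \<le> (n + 1) * (M + n + 1)" using n2 by (simp add: algebra_simps)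
      also have "\<dots> = (n + 1) ^ (1 + E)" using PM by simp
      finally show ?thesis unfolding E_def I_def n_def by (simp add: add.assoc)
    qed
  qed
qed

theorem corollary3p13:
  "\<exists>C::nat. \<forall>(G :: (nat, nat) game) v0 J v l k i c.
     wf_game G \<and> v0 \<in> verts G \<and> valid_order G v0 J \<and>
     v \<in> XV G \<and> 1 \<le> l \<and> l \<le> card (Iset G v0) - 1 \<and> snd v = J l \<and>
     i \<in> players G \<and>
     Sup (costX i ` Lam G (fst (labseq G J (card (Iset G v0)) k)) v) = enat c
     \<longrightarrow> c \<le> C * card (verts G) ^ ((card (verts G) + 3) * (card (players G) + 2))"
proof (rule exI[of _ 1], intro allI impI)
  fix G :: "(nat, nat) game" and v0 J v l k i c
  assume H: "wf_game G \<and> v0 \<in> verts G \<and> valid_order G v0 J \<and>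
     v \<in> XV G \<and> 1 \<le> l \<and> l \<le> card (Iset G v0) - 1 \<and> snd v = J l \<and>
     i \<in> players G \<and>
     Sup (costX i ` Lam G (fst (labseq G J (card (Iset G v0)) k)) v) = enat c"
  define N where "N = card (Iset G v0)"
  define n where "n = card (verts G)"
  define p where "p = card (players G)"
  have wf: "wf_game G" and vX: "v \<in> XV G" and iP: "i \<in> players G"
    and S: "Sup (costX i ` Lam G (lamk G J N k) v) = enat c"
    using H unfolding lamk_def N_def by auto
  have n2: "n \<ge> 2" and finP: "finite (players G)" and pn: "p \<le> n"
    using wf unfolding wf_game_def n_def p_def by auto
  define X where "X = 1 + p * n + n"
  define M where "M = (n + 1) ^ X - n - 1"
  have PX: "(n + 1) ^ X \<ge> n + 1"
    using power_increasing[of 1 X "n+1"] unfolding X_def by simp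
  have Mb: "\<forall>w \<in> XV G. snd v \<subseteq> snd w \<longrightarrow> i \<notin> snd w \<longrightarrow> owner G (fst w) \<notin> snd w
              \<longrightarrow> lamk G J N k w \<noteq> \<infinity> \<longrightarrow> lamk G J N k w \<le> enat M"
  proof (intro ballI impI)
    fix w assume wX: "w \<in> XV G" and "owner G (fst w) \<notin> snd w" and "lamk G J N k w \<noteq> \<infinity>"
    then obtain b where b: "lamk G J N k w = enat b" and ow: "owner G (fst w) \<notin> snd w" by auto
    have ih: "b + n + 1 \<le> (n + 1) ^ (1 + dI G (snd w) * n + fk G J N k (snd w))"
      using bound_lam[OF wf, of J N k] wX ow b unfolding n_def by blast
    have "dI G (snd w) \<le> p" unfolding dI_def p_def using finP by (intro card_mono) auto
    hence m1: "dI G (snd w) * n \<le> p * n" by (rule mult_le_mono1)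
    have m2: "fk G J N k (snd w) \<le> n" using fk_le[OF wf] unfolding n_def by blast
    have "1 + dI G (snd w) * n + fk G J N k (snd w) \<le> X" unfolding X_def using m1 m2 by linarith
    hence "(n + 1) ^ (1 + dI G (snd w) * n + fk G J N k (snd w)) \<le> (n + 1) ^ X"
      by (intro power_increasing) auto
    with ih have "b \<le> M" unfolding M_def by linarith
    then show "lamk G J N k w \<le> enat M" using b by simp
  qed
  have "c \<le> card (players G - snd v) * (M + n)"
    using cost_bound[OF wf vX iP S Mb] unfolding n_def .
  also have "\<dots> \<le> p * (M + n)" unfolding p_def using finP by (intro mult_le_mono1 card_mono) auto
  also have "\<dots> \<le> (n + 1) * (n + 1) ^ X"
    using pn PX unfolding M_def by (intro mult_le_mono) auto
  also have "\<dots> = (n + 1) ^ (2 + p * n + n)"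
  proof -
    have e: "2 + p * n + n = Suc X" unfolding X_def by simp
    show ?thesis unfolding e by (simp only: power_Suc)
  qed
  also have "\<dots> \<le> n ^ ((n + 3) * (p + 2))" using final_num n2 by blast
  finally show "c \<le> 1 * card (verts G) ^ ((card (verts G) + 3) * (card (players G) + 2))"
    unfolding n_def p_def by simp
qed

end
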